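(* Let $G$ be a finite simple graph and let $q \ge p \ge 0$ be integers. Then $\alpha_q(G) \le \left\lceil \frac{q+1}{p+1} \right\rceil \alpha_p(G)$.
   Context: For a graph $G=(V,E)$ and an integer $k\ge 0$, a $k$-independent set is a set $S\subseteq V$ such that the induced subgraph $G[S]$ has maximum degree at most $k$; $\alpha_k(G)$ denotes the maximum cardinality of a $k$-independent set of $G$ (so $\alpha_0(G)$ is the usual independence number). *)

theory Defs
  imports Complex_Main
begin

definition simple_graph :: "'a set \<Rightarrow> 'a set set \<Rightarrow> bool" where
  "simple_graph V E \<longleftrightarrow> finite V \<and> (\<forall>e\<in>E. e \<subseteq> V \<and> card e = 2)"

definition induced_degree :: "'a set set \<Rightarrow> 'a set \<Rightarrow> 'a \<Rightarrow> nat" where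
  "induced_degree E S v = card {u \<in> S. {u, v} \<in> E}"

definition k_independent :: "'a set \<Rightarrow> 'a set set \<Rightarrow> nat \<Rightarrow> 'a set \<Rightarrow> bool" where
  "k_independent V E k S \<longleftrightarrow> S \<subseteq> V \<and> (\<forall>v\<in>S. induced_degree E S v \<le> k)"

definition alpha_k :: "'a set \<Rightarrow> 'a set set \<Rightarrow> nat \<Rightarrow> nat" where
  "alpha_k V E k = Max (card ` {S. k_independent V E k S})"

end

theory Submission
  imports Defs
begin

lemma card_fibres:
  assumes "finite A" "\<forall>u\<in>A. (f::'a\<Rightarrow>nat) u < k"
  shows "card A = (\<Sum>j<k. card {u\<in>A. f u = j})"
proof -
  have "A = (\<Union>j\<in>{..<k}. {u\<in>A. f u = j})" using assms(2) by auto
  then have "card A = card (\<Union>j\<in>{..<k}. {u\<in>A. f u = j})" by simp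
  also have "\<dots> = (\<Sum>j<k. card {u\<in>A. f u = j})"
    by (rule card_UN_disjoint) (use assms(1) in auto)
  finally show ?thesis .
qed

definition dg :: "'a set set \<Rightarrow> 'a set \<Rightarrow> ('a \<Rightarrow> nat) \<Rightarrow> 'a \<Rightarrow> nat \<Rightarrow> nat" where
  "dg E S f v j = card {u\<in>S. {u,v}\<in>E \<and> f u = j}"

definition cost :: "'a set set \<Rightarrow> 'a set \<Rightarrow> ('a \<Rightarrow> nat) \<Rightarrow> nat" where
  "cost E S f = card {(u,w). u\<in>S \<and> w\<in>S \<and> {u,w}\<in>E \<and> f u = f w}"

lemma cost_split:
  assumes fin: "finite S" and v: "v \<in> S" and nl: "{v} \<notin> E"
  shows "cost E S h = card {(u,w). u\<in>S \<and> w\<in>S \<and> u\<noteq>v \<and> w\<noteq>v \<and> {u,w}\<in>E \<and> h u = h w}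
           + 2 * dg E S h v (h v)"
proof -
  let ?A = "{(u,w). u\<in>S \<and> w\<in>S \<and> u\<noteq>v \<and> w\<noteq>v \<and> {u,w}\<in>E \<and> h u = h w}"
  let ?X = "{w\<in>S. {w,v}\<in>E \<and> h w = h v}"
  let ?B = "(\<lambda>w. (v,w)) ` ?X"
  let ?C = "(\<lambda>w. (w,v)) ` ?X"
  have eq: "{(u,w). u\<in>S \<and> w\<in>S \<and> {u,w}\<in>E \<and> h u = h w} = ?A \<union> (?B \<union> ?C)"
    using v by (auto simp: insert_commute)
  have finS2: "finite (S \<times> S)" using fin by simp
  have fA: "finite ?A" by (rule finite_subset[OF _ finS2]) auto
  have fX: "finite ?X" using fin by simp
  have cB: "card ?B = card ?X" by (rule card_image) (auto simp: inj_on_def)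
  have cC: "card ?C = card ?X" by (rule card_image) (auto simp: inj_on_def)
  have dBC: "?B \<inter> ?C = {}" using nl by auto
  have dA: "?A \<inter> (?B \<union> ?C) = {}" by auto
  have "card (?A \<union> (?B \<union> ?C)) = card ?A + card (?B \<union> ?C)"
    by (rule card_Un_disjoint) (use fA fX dA in auto)
  also have "card (?B \<union> ?C) = card ?B + card ?C"
    by (rule card_Un_disjoint) (use fX dBC in auto)
  finally show ?thesis unfolding cost_def dg_def using eq cB cC by simp
qed

lemma cost_move:
  assumes fin: "finite S" and v: "v \<in> S" and nl: "{v} \<notin> E"
  shows "cost E S (f(v:=j)) + 2 * dg E S f v (f v) = cost E S f + 2 * dg E S f v j"
proof -
  let ?g = "f(v:=j)"
  have A: "{(u,w). u\<in>S \<and> w\<in>S \<and> u\<noteq>v \<and> w\<noteq>v \<and> {u,w}\<in>E \<and> ?g u = ?g w}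
         = {(u,w). u\<in>S \<and> w\<in>S \<and> u\<noteq>v \<and> w\<noteq>v \<and> {u,w}\<in>E \<and> f u = f w}" by auto
  have D: "dg E S ?g v (?g v) = dg E S f v j"
    unfolding dg_def using nl by (intro arg_cong[where f=card]) auto
  show ?thesis using cost_split[OF fin v nl, of ?g] cost_split[OF fin v nl, of f] A D by simp
qed

lemma good_partition:
  assumes fin: "finite S" and nl: "\<forall>v\<in>S. {v} \<notin> E"
    and deg: "\<forall>v\<in>S. card {u\<in>S. {u,v}\<in>E} \<le> q"
    and kq: "q + 1 \<le> k * (p + 1)"
  shows "\<forall>u\<in>S. f u < k \<Longrightarrow> \<exists>g. (\<forall>u\<in>S. g u < k) \<and> (\<forall>v\<in>S. dg E S g v (g v) \<le> p)"
proof (induction f rule: measure_induct_rule[where f="cost E S"])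
  case (less f)
  show ?case
  proof (cases "\<forall>v\<in>S. dg E S f v (f v) \<le> p")
    case True then show ?thesis using less.prems by blast
  next
    case False
    then obtain v where v: "v \<in> S" and bad: "dg E S f v (f v) > p" by auto
    have "\<exists>j<k. dg E S f v j \<le> p"
    proof (rule ccontr)
      assume "\<not> ?thesis"
      then have all: "\<forall>j<k. p + 1 \<le> dg E S f v j" by auto
      have "k * (p+1) = (\<Sum>j<k. p + 1)" by simp
      also have "\<dots> \<le> (\<Sum>j<k. dg E S f v j)" by (rule sum_mono) (use all in auto)
      also have "\<dots> = card {u\<in>S. {u,v}\<in>E}"
        unfolding dg_def
        using card_fibres[of "{u\<in>S. {u,v}\<in>E}" f k] fin less.prems by simp
      also have "\<dots> \<le> q" using deg v by auto
      finally show False using kq by simp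
    qed
    then obtain j where j: "j < k" "dg E S f v j \<le> p" by auto
    let ?g = "f(v:=j)"
    have "cost E S ?g < cost E S f"
      using cost_move[OF fin v, of E f j] nl v bad j by auto
    moreover have "\<forall>u\<in>S. ?g u < k" using less.prems j by auto
    ultimately show ?thesis using less.IH by blast
  qed
qed

lemma main_nat:
  assumes G: "simple_graph V E" and kq: "q + 1 \<le> k * (p + 1)"
  shows "alpha_k V E q \<le> k * alpha_k V E p"
proof -
  have finV: "finite V" using G by (simp add: simple_graph_def)
  have nl: "\<forall>v. {v} \<notin> E" using G by (auto simp: simple_graph_def)
  have finF: "\<And>r. finite (card ` {S. k_independent V E r S})"
    by (rule finite_imageI, rule finite_subset[of _ "Pow V"]) (auto simp: k_independent_def finV)
  have ne: "\<And>r. {S. k_independent V E r S} \<noteq> {}"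
    by (rule ccontr) (auto simp: k_independent_def induced_degree_def)
  obtain S where S: "k_independent V E q S" "alpha_k V E q = card S"
    using Max_in[OF finF, of q] ne[of q] unfolding alpha_k_def by auto
  have finS: "finite S" using S finV by (auto simp: k_independent_def intro: finite_subset)
  have deg: "\<forall>v\<in>S. card {u\<in>S. {u,v}\<in>E} \<le> q"
    using S(1) by (auto simp: k_independent_def induced_degree_def)
  obtain g where g: "\<forall>u\<in>S. g u < k" "\<forall>v\<in>S. dg E S g v (g v) \<le> p"
    using good_partition[OF finS _ deg kq, of "\<lambda>_. 0"] nl kq by force
  have part: "card {u\<in>S. g u = j} \<le> alpha_k V E p" for j
  proof -
    let ?T = "{u\<in>S. g u = j}"
    have "k_independent V E p ?T"
      unfolding k_independent_def induced_degree_def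
    proof (intro conjI ballI)
      show "?T \<subseteq> V" using S(1) by (auto simp: k_independent_def)
    next
      fix v assume "v \<in> ?T"
      then have v: "v \<in> S" "j = g v" by auto
      have "{u \<in> ?T. {u, v} \<in> E} = {u\<in>S. {u,v}\<in>E \<and> g u = g v}" using v by auto
      then show "card {u \<in> ?T. {u, v} \<in> E} \<le> p" using g(2) v unfolding dg_def by simp
    qed
    then show ?thesis unfolding alpha_k_def by (intro Max_ge[OF finF]) auto
  qed
  have "card S = (\<Sum>j<k. card {u\<in>S. g u = j})" by (rule card_fibres[OF finS g(1)])
  also have "\<dots> \<le> (\<Sum>j<k. alpha_k V E p)" by (rule sum_mono) (use part in auto)
  finally show ?thesis using S(2) by simp
qed

theorem mainTheorem1:
  fixes V :: "'a set" and E :: "'a set set" and p q :: nat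
  assumes "simple_graph V E" and "p \<le> q"
  shows "real (alpha_k V E q) \<le> real_of_int (ceiling (real (q + 1) / real (p + 1))) * real (alpha_k V E p)"
proof -
  define c where "c = ceiling (real (q + 1) / real (p + 1))"
  have "0 \<le> real (q + 1) / real (p + 1)" by simp
  then have c0: "c \<ge> 0" unfolding c_def by linarith
  have "real (q+1) / real (p+1) \<le> real_of_int c" unfolding c_def by simp
  then have "real (q+1) \<le> real_of_int c * real (p+1)" by (simp add: divide_le_eq)
  then have "real (q+1) \<le> real (nat c) * real (p+1)" using c0 by simp
  then have kq: "q + 1 \<le> nat c * (p + 1)" by (metis of_nat_le_iff of_nat_mult)
  have "alpha_k V E q \<le> nat c * alpha_k V E p" by (rule main_nat[OF assms(1) kq])
  then have "real (alpha_k V E q) \<le> real (nat c) * real (alpha_k V E p)"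
    by (metis of_nat_le_iff of_nat_mult)
  then show ?thesis using c0 unfolding c_def[symmetric] by simp
qed

end
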